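(* Assume that for every $x\in V$ the functions $s\mapsto H(x,s)$ and $s\mapsto f_l(x,s)$ ($l=1,\dots,m$) are nondecreasing, and that $|H(x,s)-H(x,t)|\le|s-t|$ for all $x\in V$, $s,t\in[0,\infty)$. If $(u^1,\dots,u^m)$ and $(v^1,\dots,v^m)$ both solve the discrete system (S), then for every $l=1,\dots,m$, $$\max_{x\in V}\big(\hat{u}^l(x)-\hat{v}^l(x)\big)=\max_{\{x\in V:\ u^l(x)\le v^l(x)\}}\big(\hat{u}^l(x)-\hat{v}^l(x)\big),$$ and, symmetrically, $$\max_{x\in V}\big(\hat{v}^l(x)-\hat{u}^l(x)\big)=\max_{\{x\in V:\ v^l(x)\le u^l(x)\}}\big(\hat{v}^l(x)-\hat{u}^l(x)\big).$$
   Context: Let $G=(V,E)$ be a finite, connected, undirected graph with at least two vertices. For $x,y\in V$, $d(x,y)$ denotes the graph (shortest-path) distance, and $\deg(x)=|\{y\in V:(x,y)\in E\}|$. The boundary of $G$ is $$\partial G=\Big\{x\in V:\ \exists\, y\in V \text{ with } \tfrac{1}{\deg(x)}\textstyle\sum_{(x,z)\in E} d(z,y)<d(x,y)\Big\},$$ and the interior is $G^o=V\setminus\partial G$. For $r:V\to\mathbb{R}$, the mean value at $x$ is $\overline{r}(x)=\frac{1}{\deg(x)}\sum_{(x,y)\in E} r(y)$. Fix an integer $m\ge1$. Let $H:V\times[0,\infty)\to\mathbb{R}$ and $f_l:V\times[0,\infty)\to\mathbb{R}$ ($l=1,\dots,m$) be continuous in the second variable with $H(x,0)=0$ and $f_l(x,0)=0$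 for all $x\in V$; they are extended to negative arguments by $H(x,s)=-H(x,-s)$ and $f_l(x,s)=-f_l(x,-s)$ for $s<0$. Let $\phi^l:\partial G\to[0,\infty)$ ($l=1,\dots,m$) be boundary data satisfying $\phi^i(x)\phi^j(x)=0$ for all $x\in\partial G$ and $i\neq j$. The discrete system (S) for $(u^1,\dots,u^m)$, $u^l:V\to\mathbb{R}$, is: for every $l=1,\dots,m$, $$u^l(x)=\max\Big(H\Big(x,\ \overline{u}^l(x)-\sum_{p\neq l}\overline{u}^p(x)\Big)-f_l\big(x,u^l(x)\big),\ 0\Big)\quad (x\in G^o),\qquad u^l(x)=\phi^l(x)\quad (x\in\partial G).$$ For a vector $(u^1,\dots,u^m)$ we write $\hat{u}^l(x)=u^l(x)-\sum_{p\neq l}u^p(x)$, and similarly $\hat{v}^l$. *)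

theory Defs
  imports "HOL-Analysis.Analysis"
begin

definition graph :: "'a set \<Rightarrow> ('a \<Rightarrow> 'a \<Rightarrow> bool) \<Rightarrow> bool" where
  "graph V E \<longleftrightarrow> finite V \<and> card V \<ge> 2
     \<and> (\<forall>x y. E x y \<longrightarrow> x \<in> V \<and> y \<in> V)
     \<and> (\<forall>x y. E x y \<longrightarrow> E y x) \<and> (\<forall>x. \<not> E x x)
     \<and> (\<forall>x\<in>V. \<forall>y\<in>V. \<exists>n. (x, y) \<in> {(a, b). E a b} ^^ n)"

definition nbrs :: "'a set \<Rightarrow> ('a \<Rightarrow> 'a \<Rightarrow> bool) \<Rightarrow> 'a \<Rightarrow> 'a set" where
  "nbrs V E x = {y \<in> V. E x y}"

definition deg :: "'a set \<Rightarrow> ('a \<Rightarrow> 'a \<Rightarrow> bool) \<Rightarrow> 'a \<Rightarrow> nat" where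
  "deg V E x = card (nbrs V E x)"

definition gdist :: "('a \<Rightarrow> 'a \<Rightarrow> bool) \<Rightarrow> 'a \<Rightarrow> 'a \<Rightarrow> nat" where
  "gdist E x y = (LEAST n. (x, y) \<in> {(a, b). E a b} ^^ n)"

definition mean_val :: "'a set \<Rightarrow> ('a \<Rightarrow> 'a \<Rightarrow> bool) \<Rightarrow> ('a \<Rightarrow> real) \<Rightarrow> 'a \<Rightarrow> real" where
  "mean_val V E r x = (\<Sum>y\<in>nbrs V E x. r y) / real (deg V E x)"

definition bdry :: "'a set \<Rightarrow> ('a \<Rightarrow> 'a \<Rightarrow> bool) \<Rightarrow> 'a set" where
  "bdry V E = {x \<in> V. \<exists>y\<in>V.
      (\<Sum>z\<in>nbrs V E x. real (gdist E z y)) / real (deg V E x) < real (gdist E x y)}"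

definition interior_set :: "'a set \<Rightarrow> ('a \<Rightarrow> 'a \<Rightarrow> bool) \<Rightarrow> 'a set" where
  "interior_set V E = V - bdry V E"

definition solves_S ::
  "'a set \<Rightarrow> ('a \<Rightarrow> 'a \<Rightarrow> bool) \<Rightarrow> nat \<Rightarrow> ('a \<Rightarrow> real \<Rightarrow> real)
   \<Rightarrow> (nat \<Rightarrow> 'a \<Rightarrow> real \<Rightarrow> real) \<Rightarrow> (nat \<Rightarrow> 'a \<Rightarrow> real)
   \<Rightarrow> (nat \<Rightarrow> 'a \<Rightarrow> real) \<Rightarrow> bool" where
  "solves_S V E m H f \<phi> u \<longleftrightarrow>
     (\<forall>l\<in>{1..m}.
        (\<forall>x\<in>interior_set V E.
           u l x = max (H x (mean_val V E (u l) x - (\<Sum>p\<in>{1..m} - {l}. mean_val V E (u p) x))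
                        - f l x (u l x)) 0)
      \<and> (\<forall>x\<in>bdry V E. u l x = \<phi> l x))"

definition hat :: "nat \<Rightarrow> (nat \<Rightarrow> 'a \<Rightarrow> real) \<Rightarrow> nat \<Rightarrow> 'a \<Rightarrow> real" where
  "hat m u l x = u l x - (\<Sum>p\<in>{1..m} - {l}. u p x)"

end

theory Submission imports Defs begin

lemma H_glob:
  fixes h :: "real \<Rightarrow> real"
  assumes mono: "mono_on {0..} h" and h0: "h 0 = 0"
    and odd: "\<And>s. s < 0 \<Longrightarrow> h s = - h (- s)"
    and lip: "\<And>s t. s \<ge> 0 \<Longrightarrow> t \<ge> 0 \<Longrightarrow> \<bar>h s - h t\<bar> \<le> \<bar>s - t\<bar>"
  shows "\<And>s t. s \<le> t \<Longrightarrow> h s \<le> h t"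
    and "\<And>s t. t \<le> s \<Longrightarrow> h s - h t \<le> s - t"
proof -
  have m: "\<And>s t. 0 \<le> s \<Longrightarrow> s \<le> t \<Longrightarrow> h s \<le> h t"
    using mono by (simp add: mono_on_def)
  show "\<And>s t. s \<le> t \<Longrightarrow> h s \<le> h t"
  proof -
    fix s t :: real assume st: "s \<le> t"
    show "h s \<le> h t"
    proof (cases "s \<ge> 0")
      case True thus ?thesis using m st by auto
    next
      case False
      then have hs: "h s = - h (-s)" using odd by auto
      have "h (-s) \<ge> 0" using m[of 0 "-s"] False h0 by auto
      show ?thesis
      proof (cases "t \<ge> 0")
        case True
        then have "h t \<ge> 0" using m[of 0 t] h0 by auto
        then show ?thesis using hs \<open>h (-s) \<ge> 0\<close> by linarith
      next
        case False
        then have "h t = - h (-t)" using odd by auto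
        moreover have "h (-t) \<le> h (-s)" using m[of "-t" "-s"] False st by auto
        ultimately show ?thesis using hs by linarith
      qed
    qed
  qed
  show "\<And>s t. t \<le> s \<Longrightarrow> h s - h t \<le> s - t"
  proof -
    fix s t :: real assume st: "t \<le> s"
    show "h s - h t \<le> s - t"
    proof (cases "t \<ge> 0")
      case True thus ?thesis using lip[of s t] st by auto
    next
      case False
      then have ht: "h t = - h (-t)" using odd by auto
      show ?thesis
      proof (cases "s \<ge> 0")
        case True
        have "h s \<le> s" using lip[of s 0] True h0 by auto
        moreover have "h (-t) \<le> -t" using lip[of "-t" 0] False h0 by auto
        ultimately show ?thesis using ht by linarith
      next
        case False
        then have "h s = - h (-s)" using odd by auto
        moreover have "h (-t) - h (-s) \<le> s - t" using lip[of "-t" "-s"] False st by auto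
        ultimately show ?thesis using ht by linarith
      qed
    qed
  qed
qed

lemma key_pointwise:
  fixes K :: "nat set" and uu vv \<alpha> \<beta> :: "nat \<Rightarrow> real" and hh :: "real \<Rightarrow> real"
    and ff :: "nat \<Rightarrow> real \<Rightarrow> real"
  assumes K: "finite K" and l: "l \<in> K"
    and hmono: "\<And>s t. s \<le> t \<Longrightarrow> hh s \<le> hh t"
    and hlip: "\<And>s t. t \<le> s \<Longrightarrow> hh s - hh t \<le> s - t"
    and h0: "hh 0 = 0"
    and ffmono: "\<And>k. k \<in> K \<Longrightarrow> mono_on {0..} (ff k)"
    and ff0: "\<And>k. k \<in> K \<Longrightarrow> ff k 0 = 0"
    and an: "\<And>k. k \<in> K \<Longrightarrow> \<alpha> k \<ge> 0"
    and bn: "\<And>k. k \<in> K \<Longrightarrow> \<beta> k \<ge> 0"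
    and ueq: "\<And>k. k \<in> K \<Longrightarrow> uu k = max (hh (\<alpha> k - (\<Sum>p\<in>K - {k}. \<alpha> p)) - ff k (uu k)) 0"
    and veq: "\<And>k. k \<in> K \<Longrightarrow> vv k = max (hh (\<beta> k - (\<Sum>p\<in>K - {k}. \<beta> p)) - ff k (vv k)) 0"
    and gt: "uu l > vv l"
  shows "(uu l - (\<Sum>p\<in>K - {l}. uu p)) - (vv l - (\<Sum>p\<in>K - {l}. vv p))
         \<le> (\<alpha> l - (\<Sum>p\<in>K - {l}. \<alpha> p)) - (\<beta> l - (\<Sum>p\<in>K - {l}. \<beta> p))"
proof -
  have gen: "\<And>w g. (\<And>k. k \<in> K \<Longrightarrow> g k \<ge> 0) \<Longrightarrow>
      (\<And>k. k \<in> K \<Longrightarrow> w k = max (hh (g k - (\<Sum>p\<in>K - {k}. g p)) - ff k (w k)) 0) \<Longrightarrow>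
      (\<forall>k\<in>K. w k \<ge> 0) \<and>
      (\<forall>k\<in>K. ff k (w k) \<ge> 0) \<and>
      (\<forall>k\<in>K. w k > 0 \<longrightarrow> g k - (\<Sum>p\<in>K - {k}. g p) > 0) \<and>
      (\<forall>k\<in>K. \<forall>p\<in>K. p \<noteq> k \<longrightarrow> (g k - (\<Sum>q\<in>K - {k}. g q)) + (g p - (\<Sum>q\<in>K - {p}. g q)) \<le> 0) \<and>
      (\<forall>k\<in>K. g k - (\<Sum>p\<in>K - {k}. g p) \<le> 0 \<longrightarrow> w k = 0) \<and>
      (\<forall>k\<in>K. w k \<le> hh (g k - (\<Sum>p\<in>K - {k}. g p)) \<or> w k = 0)"
  proof -
    fix w g :: "nat \<Rightarrow> real"
    assume gn: "\<And>k. k \<in> K \<Longrightarrow> g k \<ge> 0"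
      and weq: "\<And>k. k \<in> K \<Longrightarrow> w k = max (hh (g k - (\<Sum>p\<in>K - {k}. g p)) - ff k (w k)) 0"
    have w0: "\<forall>k\<in>K. w k \<ge> 0" using weq by (metis max.cobounded2)
    have f0: "\<forall>k\<in>K. ff k (w k) \<ge> 0"
    proof
      fix k assume k: "k \<in> K"
      have "ff k 0 \<le> ff k (w k)" using ffmono[OF k] w0 k by (auto simp: mono_on_def)
      thus "ff k (w k) \<ge> 0" using ff0[OF k] by simp
    qed
    have pos: "\<forall>k\<in>K. w k > 0 \<longrightarrow> g k - (\<Sum>p\<in>K - {k}. g p) > 0"
    proof (intro ballI impI)
      fix k assume k: "k \<in> K" and wk: "w k > 0"
      then have "w k = hh (g k - (\<Sum>p\<in>K - {k}. g p)) - ff k (w k)" using weq[OF k]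
        by (metis max_def order_less_irrefl)
      then have "hh (g k - (\<Sum>p\<in>K - {k}. g p)) > 0" using wk f0 k by fastforce
      then show "g k - (\<Sum>p\<in>K - {k}. g p) > 0"
        using hmono[of "g k - (\<Sum>p\<in>K - {k}. g p)" 0] h0 by force
    qed
    have pair: "\<forall>k\<in>K. \<forall>p\<in>K. p \<noteq> k \<longrightarrow> (g k - (\<Sum>q\<in>K - {k}. g q)) + (g p - (\<Sum>q\<in>K - {p}. g q)) \<le> 0"
    proof (intro ballI impI)
      fix k p assume k: "k \<in> K" and p: "p \<in> K" and pk: "p \<noteq> k"
      have s1: "(\<Sum>q\<in>K - {k}. g q) = g p + (\<Sum>q\<in>K - {k} - {p}. g q)"
        using K p pk by (subst sum.remove[of _ p]) auto
      have s2: "(\<Sum>q\<in>K - {p}. g q) = g k + (\<Sum>q\<in>K - {p} - {k}. g q)"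
        using K k pk by (subst sum.remove[of _ k]) auto
      have e: "K - {k} - {p} = K - {p} - {k}" by auto
      have "(\<Sum>q\<in>K - {p} - {k}. g q) \<ge> 0" using gn by (intro sum_nonneg) auto
      then show "(g k - (\<Sum>q\<in>K - {k}. g q)) + (g p - (\<Sum>q\<in>K - {p}. g q)) \<le> 0"
        using s1 s2 e by simp
    qed
    have zero: "\<forall>k\<in>K. g k - (\<Sum>p\<in>K - {k}. g p) \<le> 0 \<longrightarrow> w k = 0"
    proof (intro ballI impI)
      fix k assume k: "k \<in> K" and le: "g k - (\<Sum>p\<in>K - {k}. g p) \<le> 0"
      have "hh (g k - (\<Sum>p\<in>K - {k}. g p)) \<le> 0" using hmono[OF le] h0 by simp
      then show "w k = 0" using weq[OF k] f0 k by auto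
    qed
    have le: "\<forall>k\<in>K. w k \<le> hh (g k - (\<Sum>p\<in>K - {k}. g p)) \<or> w k = 0"
      using weq f0 by (metis max_def diff_le_eq le_add_same_cancel1)
    show "?thesis w g" using w0 f0 pos pair zero le by blast
  qed
  note U = gen[of \<alpha> uu, OF an ueq] and W = gen[of \<beta> vv, OF bn veq]
  define A where "A = (\<lambda>k. \<alpha> k - (\<Sum>p\<in>K - {k}. \<alpha> p))"
  define B where "B = (\<lambda>k. \<beta> k - (\<Sum>p\<in>K - {k}. \<beta> p))"
  have vl0: "vv l \<ge> 0" using W l by blast
  have ul: "uu l > 0" using gt vl0 by linarith
  have Al: "A l > 0" using U l ul A_def by blast
  have uothers: "\<forall>p\<in>K - {l}. uu p = 0"
  proof
    fix p assume p: "p \<in> K - {l}"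
    have "A l + A p \<le> 0" using U l p A_def by auto
    then show "uu p = 0" using U p Al A_def by auto
  qed
  then have su: "(\<Sum>p\<in>K - {l}. uu p) = 0" by simp
  have uleq: "uu l = hh (A l) - ff l (uu l)" using ueq[OF l] ul A_def
    by (metis max_def order_less_irrefl)
  have vlge: "vv l \<ge> hh (B l) - ff l (vv l)" using veq[OF l] B_def by simp
  have fle: "ff l (vv l) \<le> ff l (uu l)" using ffmono[OF l] vl0 gt by (auto simp: mono_on_def)
  have d1: "uu l - vv l \<le> hh (A l) - hh (B l)" using uleq vlge fle by linarith
  have AB: "A l \<ge> B l"
  proof (rule ccontr)
    assume "\<not> A l \<ge> B l"
    then have "hh (A l) \<le> hh (B l)" using hmono by auto
    then show False using d1 gt by linarith
  qed
  have d2: "uu l - vv l \<le> A l - B l" using d1 hlip[OF AB] by linarith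
  have goal: "(uu l - (\<Sum>p\<in>K - {l}. uu p)) - (vv l - (\<Sum>p\<in>K - {l}. vv p)) \<le> A l - B l"
  proof (cases "vv l > 0")
    case True
    then have Bl: "B l > 0" using W l B_def by blast
    have "\<forall>p\<in>K - {l}. vv p = 0"
    proof
      fix p assume p: "p \<in> K - {l}"
      have "B l + B p \<le> 0" using W l p B_def by auto
      then show "vv p = 0" using W p Bl B_def by auto
    qed
    then have "(\<Sum>p\<in>K - {l}. vv p) = 0" by simp
    then show ?thesis using su d2 by simp
  next
    case False
    then have vl: "vv l = 0" using vl0 by simp
    have ulA: "uu l \<le> A l"
    proof -
      have "hh (A l) - hh 0 \<le> A l - 0" using hlip[of 0 "A l"] Al by auto
      moreover have "ff l (uu l) \<ge> 0" using U l by blast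
      ultimately show ?thesis using uleq h0 by linarith
    qed
    show ?thesis
    proof (cases "\<forall>p\<in>K - {l}. vv p = 0")
      case True
      then have "(\<Sum>p\<in>K - {l}. vv p) = 0" by simp
      then show ?thesis using su d2 by simp
    next
      case False
      then obtain p where p: "p \<in> K - {l}" and vp: "vv p \<noteq> 0" by blast
      have vp0: "vv p > 0" using vp W p by force
      have Bp: "B p > 0" using W p vp0 B_def by blast
      have others: "\<forall>q\<in>K - {l} - {p}. vv q = 0"
      proof
        fix q assume q: "q \<in> K - {l} - {p}"
        have "B p + B q \<le> 0" using W p q B_def by auto
        then show "vv q = 0" using W q Bp B_def by auto
      qed
      have "(\<Sum>q\<in>K - {l}. vv q) = vv p + (\<Sum>q\<in>K - {l} - {p}. vv q)"
        using K p by (subst sum.remove[of _ p]) auto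
      also have "\<dots> = vv p" using others by simp
      finally have sv: "(\<Sum>q\<in>K - {l}. vv q) = vv p" .
      have Wle: "\<forall>k\<in>K. vv k \<le> hh (B k) \<or> vv k = 0"
        using W[THEN conjunct2, THEN conjunct2, THEN conjunct2, THEN conjunct2, THEN conjunct2]
        unfolding B_def .
      have "vv p \<le> hh (B p)" using Wle p vp by blast
      moreover have "hh (B p) - hh 0 \<le> B p - 0" using hlip[of 0 "B p"] Bp by auto
      moreover have "B l + B p \<le> 0" using W l p B_def by auto
      ultimately show ?thesis using su sv vl ulA h0 by linarith
    qed
  qed
  then show ?thesis unfolding A_def B_def .
qed


lemma gdist_reach:
  assumes G: "graph V E" and x: "x \<in> V" and y: "y \<in> V"
  shows "(x, y) \<in> {(a, b). E a b} ^^ gdist E x y"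
proof -
  have "\<exists>n. (x, y) \<in> {(a, b). E a b} ^^ n" using G x y unfolding graph_def by blast
  then show ?thesis unfolding gdist_def by (rule LeastI_ex)
qed

lemma two_points:
  assumes G: "graph V E" and x: "x \<in> V"
  shows "\<exists>y\<in>V. y \<noteq> x"
proof -
  have fin: "finite V" and c: "card V \<ge> 2" using G unfolding graph_def by auto
  have "card (V - {x}) \<ge> 1" using c fin x by (simp add: card_Diff_singleton)
  then have "V - {x} \<noteq> {}" by (metis card.empty not_one_le_zero)
  then show ?thesis by auto
qed

lemma deg_pos:
  assumes G: "graph V E" and x: "x \<in> V"
  shows "deg V E x > 0"
proof -
  obtain y where y: "y \<in> V" "y \<noteq> x" using two_points[OF G x] by blast
  have r: "(x, y) \<in> {(a, b). E a b} ^^ gdist E x y" using gdist_reach[OF G x y(1)] .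
  have "gdist E x y \<noteq> 0"
  proof
    assume "gdist E x y = 0"
    then have "(x, y) \<in> {(a, b). E a b} ^^ 0" using r by simp
    then show False using y(2) by simp
  qed
  then obtain n where "gdist E x y = Suc n" by (cases "gdist E x y") auto
  then have r2: "(x, y) \<in> {(a, b). E a b} ^^ Suc n" using r by simp
  obtain z where "E x z" using relpow_Suc_D2[OF r2] by auto
  then have "z \<in> nbrs V E x" using G unfolding graph_def nbrs_def by auto
  moreover have "finite (nbrs V E x)" using G unfolding graph_def nbrs_def by auto
  ultimately show ?thesis unfolding deg_def by (auto simp: card_gt_0_iff)
qed

lemma bdry_ne:
  assumes G: "graph V E"
  shows "\<exists>b. b \<in> bdry V E"
proof -
  have fin: "finite V" using G unfolding graph_def by auto
  have ne: "V \<noteq> {}" using G unfolding graph_def by auto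
  define g where "g = (\<lambda>(a, b). gdist E a b)"
  define D where "D = Max (g ` (V \<times> V))"
  have finVV: "finite (g ` (V \<times> V))" using fin by auto
  have neVV: "g ` (V \<times> V) \<noteq> {}" using ne by auto
  obtain x y where xy: "x \<in> V" "y \<in> V" "gdist E x y = D"
    using Max_in[OF finVV neVV] unfolding D_def g_def by auto
  have le: "\<And>a b. a \<in> V \<Longrightarrow> b \<in> V \<Longrightarrow> gdist E a b \<le> D"
    unfolding D_def using finVV by (intro Max_ge) (auto simp: g_def)
  obtain a where a: "a \<in> V" using ne by auto
  obtain b where b: "b \<in> V" "b \<noteq> a" using two_points[OF G a] by blast
  have "gdist E a b \<noteq> 0"
  proof
    assume "gdist E a b = 0"
    then have "(a, b) \<in> {(a, b). E a b} ^^ 0" using gdist_reach[OF G a b(1)] by simp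
    then show False using b(2) by simp
  qed
  then have D1: "D \<noteq> 0" using le[OF a b(1)] by auto
  then obtain n where n: "D = Suc n" by (cases D) auto
  have r: "(x, y) \<in> {(a, b). E a b} ^^ Suc n" using gdist_reach[OF G xy(1,2)] xy(3) n by simp
  obtain z where z: "E x z" "(z, y) \<in> {(a, b). E a b} ^^ n" using relpow_Suc_D2[OF r] by auto
  have zle: "gdist E z y \<le> n" unfolding gdist_def using z(2) by (rule Least_le)
  have zN: "z \<in> nbrs V E x" using G z(1) unfolding graph_def nbrs_def by auto
  have finN: "finite (nbrs V E x)" using G unfolding graph_def nbrs_def by auto
  have "(\<Sum>w\<in>nbrs V E x. real (gdist E w y)) < (\<Sum>w\<in>nbrs V E x. real D)"
  proof (rule sum_strict_mono_ex1[OF finN])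
    show "\<forall>w\<in>nbrs V E x. real (gdist E w y) \<le> real D"
      using le xy(2) unfolding nbrs_def by auto
    show "\<exists>w\<in>nbrs V E x. real (gdist E w y) < real D"
      using zN zle n by (intro bexI[of _ z]) auto
  qed
  also have "\<dots> = real (deg V E x) * real D" unfolding deg_def by simp
  finally have "(\<Sum>w\<in>nbrs V E x. real (gdist E w y)) / real (deg V E x) < real (gdist E x y)"
    using deg_pos[OF G xy(1)] xy(3) by (simp add: divide_less_eq mult.commute)
  then have "x \<in> bdry V E" unfolding bdry_def using xy by auto
  then show ?thesis by blast
qed

lemma mean_hat:
  "mean_val V E (hat m u l) x = mean_val V E (u l) x - (\<Sum>p\<in>{1..m} - {l}. mean_val V E (u p) x)"
proof -
  have "(\<Sum>y\<in>nbrs V E x. \<Sum>p\<in>{1..m} - {l}. u p y) = (\<Sum>p\<in>{1..m} - {l}. \<Sum>y\<in>nbrs V E x. u p y)"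
    by (rule sum.swap)
  then show ?thesis unfolding mean_val_def hat_def
    by (simp add: sum_subtractf sum_divide_distrib[symmetric] diff_divide_distrib)
qed


lemma mean_diff: "mean_val V E (\<lambda>y. a y - b y) x = mean_val V E a x - mean_val V E b x"
  unfolding mean_val_def by (simp add: sum_subtractf diff_divide_distrib)

lemma half:
  fixes V :: "'a set" and E :: "'a \<Rightarrow> 'a \<Rightarrow> bool" and m :: nat
    and H :: "'a \<Rightarrow> real \<Rightarrow> real" and f :: "nat \<Rightarrow> 'a \<Rightarrow> real \<Rightarrow> real"
    and \<phi> u v :: "nat \<Rightarrow> 'a \<Rightarrow> real" and l :: nat
  assumes G: "graph V E"
    and H0: "\<And>x. x \<in> V \<Longrightarrow> H x 0 = 0"
    and f0: "\<And>k x. k \<in> {1..m} \<Longrightarrow> x \<in> V \<Longrightarrow> f k x 0 = 0"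
    and H_odd: "\<And>x s. x \<in> V \<Longrightarrow> s < 0 \<Longrightarrow> H x s = - H x (- s)"
    and phi_nonneg: "\<And>k x. k \<in> {1..m} \<Longrightarrow> x \<in> bdry V E \<Longrightarrow> \<phi> k x \<ge> 0"
    and H_mono: "\<And>x. x \<in> V \<Longrightarrow> mono_on {0..} (H x)"
    and f_mono: "\<And>k x. k \<in> {1..m} \<Longrightarrow> x \<in> V \<Longrightarrow> mono_on {0..} (f k x)"
    and H_lip: "\<And>x s t. x \<in> V \<Longrightarrow> s \<ge> 0 \<Longrightarrow> t \<ge> 0 \<Longrightarrow> \<bar>H x s - H x t\<bar> \<le> \<bar>s - t\<bar>"
    and u_sol: "solves_S V E m H f \<phi> u"
    and v_sol: "solves_S V E m H f \<phi> v"
    and l: "l \<in> {1..m}"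
  shows "Max ((\<lambda>x. hat m u l x - hat m v l x) ` V)
           = Max ((\<lambda>x. hat m u l x - hat m v l x) ` {x \<in> V. u l x \<le> v l x})"
proof -
  define w where "w = (\<lambda>x. hat m u l x - hat m v l x)"
  have fin: "finite V" using G unfolding graph_def by auto
  have Vsplit: "V = interior_set V E \<union> bdry V E" unfolding interior_set_def bdry_def by auto
  have nn: "\<And>uu k x. solves_S V E m H f \<phi> uu \<Longrightarrow> k \<in> {1..m} \<Longrightarrow> x \<in> V \<Longrightarrow> uu k x \<ge> 0"
  proof -
    fix uu k x assume s: "solves_S V E m H f \<phi> uu" and k: "k \<in> {1..m}" and x: "x \<in> V"
    show "uu k x \<ge> 0"
    proof (cases "x \<in> bdry V E")
      case True then show ?thesis using s k phi_nonneg unfolding solves_S_def by auto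
    next
      case False
      then have "x \<in> interior_set V E" using x unfolding interior_set_def by auto
      then show ?thesis using s k unfolding solves_S_def by (metis max.cobounded2)
    qed
  qed
  have mn: "\<And>uu k x. solves_S V E m H f \<phi> uu \<Longrightarrow> k \<in> {1..m} \<Longrightarrow> mean_val V E (uu k) x \<ge> 0"
    unfolding mean_val_def using nn by (intro divide_nonneg_nonneg sum_nonneg) (auto simp: nbrs_def)
  have key: "w x \<le> mean_val V E w x" if x: "x \<in> interior_set V E" and gt: "u l x > v l x" for x
  proof -
    have xV: "x \<in> V" using x unfolding interior_set_def by auto
    note HG = H_glob[OF H_mono[OF xV] H0[OF xV] H_odd[OF xV] H_lip[OF xV]]
    have "(u l x - (\<Sum>p\<in>{1..m} - {l}. u p x)) - (v l x - (\<Sum>p\<in>{1..m} - {l}. v p x))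
         \<le> (mean_val V E (u l) x - (\<Sum>p\<in>{1..m} - {l}. mean_val V E (u p) x))
           - (mean_val V E (v l) x - (\<Sum>p\<in>{1..m} - {l}. mean_val V E (v p) x))"
    proof (rule key_pointwise[where hh = "H x" and ff = "\<lambda>k. f k x"])
      show "finite {1..m}" by simp
      show "l \<in> {1..m}" by (rule l)
      show "\<And>s t. s \<le> t \<Longrightarrow> H x s \<le> H x t" by (rule HG(1))
      show "\<And>s t. t \<le> s \<Longrightarrow> H x s - H x t \<le> s - t" by (rule HG(2))
      show "H x 0 = 0" by (rule H0[OF xV])
      show "\<And>k. k \<in> {1..m} \<Longrightarrow> mono_on {0..} (f k x)" using f_mono xV by auto
      show "\<And>k. k \<in> {1..m} \<Longrightarrow> f k x 0 = 0" using f0 xV by auto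
      show "\<And>k. k \<in> {1..m} \<Longrightarrow> mean_val V E (u k) x \<ge> 0" using mn u_sol by auto
      show "\<And>k. k \<in> {1..m} \<Longrightarrow> mean_val V E (v k) x \<ge> 0" using mn v_sol by auto
      show "\<And>k. k \<in> {1..m} \<Longrightarrow> u k x = max (H x (mean_val V E (u k) x
              - (\<Sum>p\<in>{1..m} - {k}. mean_val V E (u p) x)) - f k x (u k x)) 0"
        using u_sol x unfolding solves_S_def by auto
      show "\<And>k. k \<in> {1..m} \<Longrightarrow> v k x = max (H x (mean_val V E (v k) x
              - (\<Sum>p\<in>{1..m} - {k}. mean_val V E (v p) x)) - f k x (v k x)) 0"
        using v_sol x unfolding solves_S_def by auto
      show "u l x > v l x" by (rule gt)
    qed
    moreover have "mean_val V E w x = mean_val V E (hat m u l) x - mean_val V E (hat m v l) x"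
      unfolding w_def by (rule mean_diff)
    moreover note mean_hat[of V E m u l x] mean_hat[of V E m v l x]
    moreover have "w x = (u l x - (\<Sum>p\<in>{1..m} - {l}. u p x)) - (v l x - (\<Sum>p\<in>{1..m} - {l}. v p x))"
      unfolding w_def hat_def by simp
    ultimately show ?thesis by linarith
  qed
  have bd: "\<And>b. b \<in> bdry V E \<Longrightarrow> u l b = v l b"
    using u_sol v_sol l unfolding solves_S_def by auto
  define M where "M = Max (w ` V)"
  have neV: "V \<noteq> {}" using G unfolding graph_def by auto
  have "M \<in> w ` V" unfolding M_def using fin neV by (intro Max_in) auto
  then obtain x0 where x0: "x0 \<in> V" "w x0 = M" by auto
  have wle: "\<And>y. y \<in> V \<Longrightarrow> w y \<le> M" unfolding M_def using fin by auto
  have ex: "\<exists>x\<in>V. u l x \<le> v l x \<and> w x = M"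
  proof (rule ccontr)
    assume nex: "\<not> ?thesis"
    have closed: "\<And>x y. x \<in> V \<Longrightarrow> w x = M \<Longrightarrow> E x y \<Longrightarrow> w y = M"
    proof -
      fix x y assume xV: "x \<in> V" and wx: "w x = M" and e: "E x y"
      have gt: "u l x > v l x" using nex xV wx by force
      have xi: "x \<in> interior_set V E" using xV gt bd unfolding interior_set_def by force
      have finN: "finite (nbrs V E x)" using fin unfolding nbrs_def by auto
      have yN: "y \<in> nbrs V E x" using G e unfolding graph_def nbrs_def by auto
      have dp: "real (deg V E x) > 0" using deg_pos[OF G xV] by simp
      show "w y = M"
      proof (rule ccontr)
        assume "w y \<noteq> M"
        then have wy: "w y < M" using wle yN unfolding nbrs_def by force
        have "(\<Sum>z\<in>nbrs V E x. w z) < (\<Sum>z\<in>nbrs V E x. M)"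
          using wle wy yN by (intro sum_strict_mono_ex1[OF finN]) (auto simp: nbrs_def)
        also have "\<dots> = real (deg V E x) * M" unfolding deg_def by simp
        finally have "mean_val V E w x < M"
          unfolding mean_val_def using dp by (simp add: divide_less_eq mult.commute)
        then show False using key[OF xi gt] wx by linarith
      qed
    qed
    have reach: "\<And>n y. (x0, y) \<in> {(a, b). E a b} ^^ n \<Longrightarrow> y \<in> V \<and> w y = M"
    proof -
      fix n y show "(x0, y) \<in> {(a, b). E a b} ^^ n \<Longrightarrow> y \<in> V \<and> w y = M"
      proof (induction n arbitrary: y)
        case 0 then show ?case using x0 by simp
      next
        case (Suc n)
        then obtain z where z: "(x0, z) \<in> {(a, b). E a b} ^^ n" "E z y" by auto
        then have "z \<in> V \<and> w z = M" using Suc.IH by blast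
        moreover have "y \<in> V" using G z(2) unfolding graph_def by auto
        ultimately show ?case using closed z(2) by blast
      qed
    qed
    obtain b where b: "b \<in> bdry V E" using bdry_ne[OF G] by blast
    have bV: "b \<in> V" using b unfolding bdry_def by auto
    have "w b = M" using reach gdist_reach[OF G x0(1) bV] by blast
    then show False using nex bV bd[OF b] by auto
  qed
  then obtain xs where xs: "xs \<in> V" "u l xs \<le> v l xs" "w xs = M" by blast
  have finS: "finite (w ` {x \<in> V. u l x \<le> v l x})" using fin by auto
  have "Max (w ` {x \<in> V. u l x \<le> v l x}) \<le> M"
    unfolding M_def using fin xs by (intro Max_mono) auto
  moreover have "M \<le> Max (w ` {x \<in> V. u l x \<le> v l x})"
    using xs finS by (metis (mono_tags, lifting) Max_ge image_eqI mem_Collect_eq)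
  ultimately show ?thesis unfolding M_def w_def by linarith
qed

theorem lemma3:
  fixes V :: "'a set" and E :: "'a \<Rightarrow> 'a \<Rightarrow> bool" and m :: nat
    and H :: "'a \<Rightarrow> real \<Rightarrow> real" and f :: "nat \<Rightarrow> 'a \<Rightarrow> real \<Rightarrow> real"
    and \<phi> u v :: "nat \<Rightarrow> 'a \<Rightarrow> real" and l :: nat
  assumes G: "graph V E"
    and m: "m \<ge> 1"
    and H_cont: "\<And>x. x \<in> V \<Longrightarrow> continuous_on {0..} (H x)"
    and f_cont: "\<And>k x. k \<in> {1..m} \<Longrightarrow> x \<in> V \<Longrightarrow> continuous_on {0..} (f k x)"
    and H0: "\<And>x. x \<in> V \<Longrightarrow> H x 0 = 0"
    and f0: "\<And>k x. k \<in> {1..m} \<Longrightarrow> x \<in> V \<Longrightarrow> f k x 0 = 0"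
    and H_odd: "\<And>x s. x \<in> V \<Longrightarrow> s < 0 \<Longrightarrow> H x s = - H x (- s)"
    and f_odd: "\<And>k x s. k \<in> {1..m} \<Longrightarrow> x \<in> V \<Longrightarrow> s < 0 \<Longrightarrow> f k x s = - f k x (- s)"
    and phi_nonneg: "\<And>k x. k \<in> {1..m} \<Longrightarrow> x \<in> bdry V E \<Longrightarrow> \<phi> k x \<ge> 0"
    and phi_disj: "\<And>i j x. i \<in> {1..m} \<Longrightarrow> j \<in> {1..m} \<Longrightarrow> i \<noteq> j \<Longrightarrow> x \<in> bdry V E
                     \<Longrightarrow> \<phi> i x * \<phi> j x = 0"
    and H_mono: "\<And>x. x \<in> V \<Longrightarrow> mono_on {0..} (H x)"
    and f_mono: "\<And>k x. k \<in> {1..m} \<Longrightarrow> x \<in> V \<Longrightarrow> mono_on {0..} (f k x)"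
    and H_lip: "\<And>x s t. x \<in> V \<Longrightarrow> s \<ge> 0 \<Longrightarrow> t \<ge> 0 \<Longrightarrow> \<bar>H x s - H x t\<bar> \<le> \<bar>s - t\<bar>"
    and u_sol: "solves_S V E m H f \<phi> u"
    and v_sol: "solves_S V E m H f \<phi> v"
    and l: "l \<in> {1..m}"
  shows "Max ((\<lambda>x. hat m u l x - hat m v l x) ` V)
           = Max ((\<lambda>x. hat m u l x - hat m v l x) ` {x \<in> V. u l x \<le> v l x})
       \<and> Max ((\<lambda>x. hat m v l x - hat m u l x) ` V)
           = Max ((\<lambda>x. hat m v l x - hat m u l x) ` {x \<in> V. v l x \<le> u l x})"
proof (rule conjI)
  show "Max ((\<lambda>x. hat m u l x - hat m v l x) ` V)
           = Max ((\<lambda>x. hat m u l x - hat m v l x) ` {x \<in> V. u l x \<le> v l x})"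
    by (rule half[OF G H0 f0 H_odd phi_nonneg H_mono f_mono H_lip u_sol v_sol l])
  show "Max ((\<lambda>x. hat m v l x - hat m u l x) ` V)
           = Max ((\<lambda>x. hat m v l x - hat m u l x) ` {x \<in> V. v l x \<le> u l x})"
    by (rule half[OF G H0 f0 H_odd phi_nonneg H_mono f_mono H_lip v_sol u_sol l])
qed

end
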